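(* Let $x\in S\cap\mathbb{R}^n$ and $J\subset[n]$. Then $J$ is a feasible descent direction at $x$ (i.e. $x+\delta\chi_J\in S$ and $f(x+\delta\chi_J)<f(x)$ for all $0<\delta<\epsilon(x)$) if and only if: (1) for any $j\in J$ and any $w_i\in\mathcal{N}^-_W(j,x)$ there exists $j'\in\mathcal{N}^-_V(w_i,x)$ with $j'\in J$; and (2) $\mu(J,x)<0$.
   Context: $\mathbb{R}_{\max}=\mathbb{R}\cup\{-\infty\}$, $\chi_J$ the indicator vector of $J$. Data: $A^\pm=(a^\pm_{i,j})\in\mathbb{R}_{\max}^{m\times n}$, $C=(c_{k,j})\in\mathbb{R}_{\max}^{p\times n}$, $\mu^+\in\mathbb{Z}_{\ge0}^p$, $\mu^-\in\mathbb{Z}_{\ge0}^n$; $A=(a_{i,j})$, $a_{i,j}=\max(a^+_{i,j},a^-_{i,j})$. $f(x)=\sum_k\mu^+_k\max_j(c_{k,j}+x_j)-\sum_j\mu^-_jx_j$; $S=\{x:\max_j(a^+_{i,j}+x_j)\ge\max_j(a^-_{i,j}+x_j)\ \forall i\in[m]\}$. Standing assumptions: each row of $A$ and $C$ has a finite entry; $\sum_k\mu^+_k=\sum_j\mu^-_j$; the undirected graph on $\{u_k\}\cup[n]\cup\{w_i\}$ with edges $\{u_k,j\}$ ($c_{k,j}\ne-\infty$), $\{w_i,j\}$ ($a_{i,j}\ne-\infty$) is connected. $\epsilon(x)$ is the smallest positive value among $|(a_{i,j_1}+x_{j_1})-(a_{i,j_2}+x_{j_2})|$ and $|(c_{k,j_1}+x_{j_1})-(c_{k,j_2}+x_{j_2})|$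 over all $i,k,j_1,j_2$. Tangent digraph $\mathcal{G}(x)$ on $U=\{u_1..u_p\}$, $V=[n]$, $W=\{w_1..w_m\}$ with edges $E_1(x)=\{(u_k,j):\max_{j'}(c_{k,j'}+x_{j'})=c_{k,j}+x_j\}$, $E_2(x)=\{(w_i,j):\max_{j'}(a_{i,j'}+x_{j'})=a^-_{i,j}+x_j\}$, $E_3(x)=\{(j,w_i):\max_{j'}(a_{i,j'}+x_{j'})=a^+_{i,j}+x_j\}$. $\mathcal{N}_U(J,x)=\{u_k:(u_k,j)\in E_1(x)\text{ for some }j\in J\}$, $\mathcal{N}^-_W(j,x)=\{w_i:(w_i,j)\in E_2(x)\}$, $\mathcal{N}^-_V(w_i,x)=\{j:(j,w_i)\in E_3(x)\}$, and $\mu(J,x)=\sum_{u_k\in\mathcal{N}_U(J,x)}\mu^+_k-\sum_{j\in J}\mu^-_j$. *)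

theory Defs
  imports "HOL-Library.Extended_Real"
begin

(* Indices are 0-based: [n] is rendered as {..<n}, [m] as {..<m}, [p] as {..<p}.
   Matrices over R_max are functions nat => nat => ereal whose entries are never +infinity.
   Points x in R^n are functions nat => real; only the values x j for j < n matter. *)

definition Amax :: "(nat \<Rightarrow> nat \<Rightarrow> ereal) \<Rightarrow> (nat \<Rightarrow> nat \<Rightarrow> ereal) \<Rightarrow> nat \<Rightarrow> nat \<Rightarrow> ereal" where
  "Amax Ap Am i j = max (Ap i j) (Am i j)"

definition rowmax :: "nat \<Rightarrow> (nat \<Rightarrow> nat \<Rightarrow> ereal) \<Rightarrow> (nat \<Rightarrow> real) \<Rightarrow> nat \<Rightarrow> ereal" where
  "rowmax n M x i = Max ((\<lambda>j. M i j + ereal (x j)) ` {..<n})"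

definition objf :: "nat \<Rightarrow> nat \<Rightarrow> (nat \<Rightarrow> nat \<Rightarrow> ereal) \<Rightarrow> (nat \<Rightarrow> nat) \<Rightarrow> (nat \<Rightarrow> nat)
    \<Rightarrow> (nat \<Rightarrow> real) \<Rightarrow> ereal" where
  "objf n p C mup mum x =
     (\<Sum>k<p. ereal (real (mup k)) * rowmax n C x k) - ereal (\<Sum>j<n. real (mum j) * x j)"

definition feasS :: "nat \<Rightarrow> nat \<Rightarrow> (nat \<Rightarrow> nat \<Rightarrow> ereal) \<Rightarrow> (nat \<Rightarrow> nat \<Rightarrow> ereal) \<Rightarrow> (nat \<Rightarrow> real) set" where
  "feasS n m Ap Am = {x. \<forall>i<m. rowmax n Ap x i \<ge> rowmax n Am x i}"

definition indic_add :: "(nat \<Rightarrow> real) \<Rightarrow> real \<Rightarrow> nat set \<Rightarrow> nat \<Rightarrow> real" where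
  "indic_add x \<delta> J = (\<lambda>j. x j + (if j \<in> J then \<delta> else 0))"

(* epsilon(x): smallest positive value among the (finite) differences;
   +infinity if there is no such value *)
definition eps :: "nat \<Rightarrow> nat \<Rightarrow> nat \<Rightarrow> (nat \<Rightarrow> nat \<Rightarrow> ereal) \<Rightarrow> (nat \<Rightarrow> nat \<Rightarrow> ereal) \<Rightarrow> (nat \<Rightarrow> nat \<Rightarrow> ereal)
    \<Rightarrow> (nat \<Rightarrow> real) \<Rightarrow> ereal" where
  "eps n m p Ap Am C x = Inf (ereal ` {d. d > 0 \<and>
      ((\<exists>i<m. \<exists>j1<n. \<exists>j2<n. \<exists>a1 a2. Amax Ap Am i j1 = ereal a1 \<and> Amax Ap Am i j2 = ereal a2 \<and>
           d = \<bar>(a1 + x j1) - (a2 + x j2)\<bar>) \<or>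
       (\<exists>k<p. \<exists>j1<n. \<exists>j2<n. \<exists>c1 c2. C k j1 = ereal c1 \<and> C k j2 = ereal c2 \<and>
           d = \<bar>(c1 + x j1) - (c2 + x j2)\<bar>))})"

definition E1 :: "nat \<Rightarrow> (nat \<Rightarrow> nat \<Rightarrow> ereal) \<Rightarrow> (nat \<Rightarrow> real) \<Rightarrow> nat \<Rightarrow> nat \<Rightarrow> bool" where
  "E1 n C x k j \<longleftrightarrow> rowmax n C x k = C k j + ereal (x j)"

definition E2 :: "nat \<Rightarrow> (nat \<Rightarrow> nat \<Rightarrow> ereal) \<Rightarrow> (nat \<Rightarrow> nat \<Rightarrow> ereal) \<Rightarrow> (nat \<Rightarrow> real) \<Rightarrow> nat \<Rightarrow> nat \<Rightarrow> bool" where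
  "E2 n Ap Am x i j \<longleftrightarrow> rowmax n (Amax Ap Am) x i = Am i j + ereal (x j)"

(* E3 n Ap Am x j i means the edge (j, w_i) *)
definition E3 :: "nat \<Rightarrow> (nat \<Rightarrow> nat \<Rightarrow> ereal) \<Rightarrow> (nat \<Rightarrow> nat \<Rightarrow> ereal) \<Rightarrow> (nat \<Rightarrow> real) \<Rightarrow> nat \<Rightarrow> nat \<Rightarrow> bool" where
  "E3 n Ap Am x j i \<longleftrightarrow> rowmax n (Amax Ap Am) x i = Ap i j + ereal (x j)"

definition NU :: "nat \<Rightarrow> nat \<Rightarrow> (nat \<Rightarrow> nat \<Rightarrow> ereal) \<Rightarrow> nat set \<Rightarrow> (nat \<Rightarrow> real) \<Rightarrow> nat set" where
  "NU n p C J x = {k. k < p \<and> (\<exists>j\<in>J. E1 n C x k j)}"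

definition NW_in :: "nat \<Rightarrow> nat \<Rightarrow> (nat \<Rightarrow> nat \<Rightarrow> ereal) \<Rightarrow> (nat \<Rightarrow> nat \<Rightarrow> ereal) \<Rightarrow> nat \<Rightarrow> (nat \<Rightarrow> real) \<Rightarrow> nat set" where
  "NW_in n m Ap Am j x = {i. i < m \<and> E2 n Ap Am x i j}"

definition NV_in :: "nat \<Rightarrow> (nat \<Rightarrow> nat \<Rightarrow> ereal) \<Rightarrow> (nat \<Rightarrow> nat \<Rightarrow> ereal) \<Rightarrow> nat \<Rightarrow> (nat \<Rightarrow> real) \<Rightarrow> nat set" where
  "NV_in n Ap Am i x = {j. j < n \<and> E3 n Ap Am x j i}"

definition muJ :: "nat \<Rightarrow> nat \<Rightarrow> (nat \<Rightarrow> nat \<Rightarrow> ereal) \<Rightarrow> (nat \<Rightarrow> nat) \<Rightarrow> (nat \<Rightarrow> nat)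
    \<Rightarrow> nat set \<Rightarrow> (nat \<Rightarrow> real) \<Rightarrow> int" where
  "muJ n p C mup mum J x = (\<Sum>k\<in>NU n p C J x. int (mup k)) - (\<Sum>j\<in>J. int (mum j))"

datatype gvert = Uv nat | Vv nat | Wv nat

definition gverts :: "nat \<Rightarrow> nat \<Rightarrow> nat \<Rightarrow> gvert set" where
  "gverts n m p = Uv ` {..<p} \<union> Vv ` {..<n} \<union> Wv ` {..<m}"

definition gedges :: "nat \<Rightarrow> nat \<Rightarrow> nat \<Rightarrow> (nat \<Rightarrow> nat \<Rightarrow> ereal) \<Rightarrow> (nat \<Rightarrow> nat \<Rightarrow> ereal)
    \<Rightarrow> (gvert \<times> gvert) set" where
  "gedges n m p A C =
     {(Uv k, Vv j) | k j. k < p \<and> j < n \<and> C k j \<noteq> -\<infinity>} \<union>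
     {(Vv j, Uv k) | k j. k < p \<and> j < n \<and> C k j \<noteq> -\<infinity>} \<union>
     {(Wv i, Vv j) | i j. i < m \<and> j < n \<and> A i j \<noteq> -\<infinity>} \<union>
     {(Vv j, Wv i) | i j. i < m \<and> j < n \<and> A i j \<noteq> -\<infinity>}"

definition graph_connected :: "nat \<Rightarrow> nat \<Rightarrow> nat \<Rightarrow> (nat \<Rightarrow> nat \<Rightarrow> ereal) \<Rightarrow> (nat \<Rightarrow> nat \<Rightarrow> ereal) \<Rightarrow> bool" where
  "graph_connected n m p A C \<longleftrightarrow>
     (\<forall>u\<in>gverts n m p. \<forall>v\<in>gverts n m p. (u, v) \<in> (gedges n m p A C)\<^sup>*)"

end

theory Submission imports Defs begin

lemma max_attained:
  fixes f :: "nat \<Rightarrow> ereal"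
  assumes "0 < n"
  shows "\<exists>j<n. Max (f ` {..<n}) = f j"
proof -
  have "Max (f ` {..<n}) \<in> f ` {..<n}" using assms by (intro Max_in) auto
  then show ?thesis by auto
qed

lemma max_ge: "j < (n::nat) \<Longrightarrow> (f j :: ereal) \<le> Max (f ` {..<n})"
  by (rule Max_ge) auto

lemma max_cmp:
  fixes f g :: "nat \<Rightarrow> ereal"
  assumes "0 < n"
  shows "(Max (g ` {..<n}) \<le> Max (f ` {..<n})) \<longleftrightarrow> (\<forall>j<n. \<exists>j'<n. g j \<le> f j')"
proof -
  have ne: "g ` {..<n} \<noteq> {}" "f ` {..<n} \<noteq> {}" using assms by auto
  have "(Max (g ` {..<n}) \<le> Max (f ` {..<n})) \<longleftrightarrow> (\<forall>j<n. g j \<le> Max (f ` {..<n}))"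
    using Max_le_iff[of "g ` {..<n}"] ne by auto
  also have "\<dots> \<longleftrightarrow> (\<forall>j<n. \<exists>j'<n. g j \<le> f j')"
    using Max_ge_iff[of "f ` {..<n}"] ne by auto
  finally show ?thesis .
qed

lemma rowmax_fin:
  fixes r :: "nat \<Rightarrow> ereal"
  assumes "\<forall>j<n. r j \<noteq> \<infinity>" "\<exists>j<n. r j \<noteq> -\<infinity>"
  shows "\<exists>M j. j < n \<and> r j = ereal (M - y j) \<and> Max ((\<lambda>j. r j + ereal (y j)) ` {..<n}) = ereal M"
proof -
  from assms(2) obtain j0 where j0: "j0<n" "r j0 \<noteq> -\<infinity>" by auto
  then have n: "0<n" by simp
  obtain j where j: "j<n" "Max ((\<lambda>j. r j + ereal (y j)) ` {..<n}) = r j + ereal (y j)"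
    using max_attained[OF n] by blast
  have ge: "r j + ereal (y j) \<ge> r j0 + ereal (y j0)" using j(2) max_ge[OF j0(1), of "\<lambda>j. r j + ereal (y j)"] by simp
  have "r j \<noteq> -\<infinity>" proof
    assume "r j = -\<infinity>" then show False using ge j0 by (cases "r j0") auto
  qed
  with assms(1) j obtain a where a: "r j = ereal a" by (cases "r j") auto
  show ?thesis
    apply (rule exI[of _ "a + y j"], rule exI[of _ j]) using j a by auto
qed

lemma max_shift:
  fixes r :: "nat \<Rightarrow> ereal"
  assumes n: "0<n" and M: "Max ((\<lambda>j. r j + ereal (x j)) ` {..<n}) = ereal M"
    and gap: "\<forall>j<n. \<forall>a. r j = ereal a \<and> a + x j \<noteq> M \<longrightarrow> \<delta> < \<bar>a + x j - M\<bar>"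
    and d: "0 < \<delta>"
  shows "Max ((\<lambda>j. r j + ereal (indic_add x \<delta> J j)) ` {..<n}) =
     (if \<exists>j\<in>J. j<n \<and> r j + ereal (x j) = ereal M then ereal (M + \<delta>) else ereal M)"
    (is "_ = ?v")
proof (rule Max_eqI)
  show "finite ((\<lambda>j. r j + ereal (indic_add x \<delta> J j)) ` {..<n})" by simp
next
  have vM: "ereal M \<le> ?v" using d by simp
  fix y assume "y \<in> (\<lambda>j. r j + ereal (indic_add x \<delta> J j)) ` {..<n}"
  then obtain j where j: "j<n" "y = r j + ereal (indic_add x \<delta> J j)" by blast
  have le: "r j + ereal (x j) \<le> ereal M" using M max_ge[OF j(1), of "\<lambda>j. r j + ereal (x j)"] by simp
  show "y \<le> ?v"
  proof (cases "r j")
    case (real a)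
    then have aM: "a + x j \<le> M" using le by simp
    show ?thesis
    proof (cases "a + x j = M")
      case True
      show ?thesis
      proof (cases "j \<in> J")
        case jJ: True
        then have "y = ereal (M + \<delta>)" using j(2) real True by (simp add: indic_add_def)
        moreover have "\<exists>j\<in>J. j<n \<and> r j + ereal (x j) = ereal M" using jJ j(1) real True by auto
        ultimately show ?thesis by simp
      next
        case False
        then have "y = ereal M" using j(2) real True by (simp add: indic_add_def)
        then show ?thesis using vM by simp
      qed
    next
      case False
      then have "\<delta> < \<bar>a + x j - M\<bar>" using gap j(1) real by blast
      then have "a + x j + \<delta> < M" using aM by linarith
      then have "a + indic_add x \<delta> J j \<le> M" using d by (simp add: indic_add_def)
      then have "y \<le> ereal M" using j(2) real by simp
      then show ?thesis using vM by (rule order_trans)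
    qed
  next
    case PInf then show ?thesis using le by simp
  next
    case MInf then show ?thesis using j by simp
  qed
next
  show "?v \<in> (\<lambda>j. r j + ereal (indic_add x \<delta> J j)) ` {..<n}"
  proof (cases "\<exists>j\<in>J. j<n \<and> r j + ereal (x j) = ereal M")
    case True
    then obtain j where j: "j\<in>J" "j<n" "r j + ereal (x j) = ereal M" by blast
    then obtain a where a: "r j = ereal a" by (cases "r j") auto
    then have "r j + ereal (indic_add x \<delta> J j) = ereal (M+\<delta>)" using j by (simp add: indic_add_def)
    then have "?v = r j + ereal (indic_add x \<delta> J j)" using True by simp
    then show ?thesis using j(2) by blast
  next
    case False
    obtain j where j: "j<n" "Max ((\<lambda>j. r j + ereal (x j)) ` {..<n}) = r j + ereal (x j)"
      using max_attained[OF n] by blast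
    then have j2: "r j + ereal (x j) = ereal M" using M by simp
    then have "j \<notin> J" using False j(1) by blast
    then have "r j + ereal (indic_add x \<delta> J j) = ereal M" using j2 by (simp add: indic_add_def)
    moreover have "?v = ereal M" using False by (simp only: if_False)
    ultimately have "?v = r j + ereal (indic_add x \<delta> J j)" by simp
    then show ?thesis using j(1) by blast
  qed
qed


lemma eps_le_A:
  assumes "i<m" "j1<n" "j2<n" "Amax Ap Am i j1 = ereal a1" "Amax Ap Am i j2 = ereal a2"
    "a1 + x j1 \<noteq> a2 + x j2"
  shows "eps n m p Ap Am C x \<le> ereal \<bar>(a1 + x j1) - (a2 + x j2)\<bar>"
proof -
  have "0 < \<bar>(a1 + x j1) - (a2 + x j2)\<bar>" using assms(6) by simp
  moreover have "\<exists>i<m. \<exists>j1'<n. \<exists>j2'<n. \<exists>a1' a2'. Amax Ap Am i j1' = ereal a1' \<and> Amax Ap Am i j2' = ereal a2' \<and>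
           \<bar>(a1 + x j1) - (a2 + x j2)\<bar> = \<bar>(a1' + x j1') - (a2' + x j2')\<bar>" using assms by blast
  ultimately show ?thesis unfolding eps_def by (intro Inf_lower imageI CollectI) blast
qed

lemma eps_le_C:
  assumes "k<p" "j1<n" "j2<n" "C k j1 = ereal a1" "C k j2 = ereal a2"
    "a1 + x j1 \<noteq> a2 + x j2"
  shows "eps n m p Ap Am C x \<le> ereal \<bar>(a1 + x j1) - (a2 + x j2)\<bar>"
proof -
  have "0 < \<bar>(a1 + x j1) - (a2 + x j2)\<bar>" using assms(6) by simp
  moreover have "\<exists>k<p. \<exists>j1'<n. \<exists>j2'<n. \<exists>a1' a2'. C k j1' = ereal a1' \<and> C k j2' = ereal a2' \<and>
           \<bar>(a1 + x j1) - (a2 + x j2)\<bar> = \<bar>(a1' + x j1') - (a2' + x j2')\<bar>" using assms by blast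
  ultimately show ?thesis unfolding eps_def by (intro Inf_lower imageI CollectI) blast
qed

lemma eps_pos: "0 < eps n m p Ap Am C x"
proof -
  define D where "D = {d. d > 0 \<and>
      ((\<exists>i<m. \<exists>j1<n. \<exists>j2<n. \<exists>a1 a2. Amax Ap Am i j1 = ereal a1 \<and> Amax Ap Am i j2 = ereal a2 \<and>
           d = \<bar>(a1 + x j1) - (a2 + x j2)\<bar>) \<or>
       (\<exists>k<p. \<exists>j1<n. \<exists>j2<n. \<exists>c1 c2. C k j1 = ereal c1 \<and> C k j2 = ereal c2 \<and>
           d = \<bar>(c1 + x j1) - (c2 + x j2)\<bar>))}"
  have e: "eps n m p Ap Am C x = Inf (ereal ` D)" unfolding eps_def D_def ..
  define g where "g = (\<lambda>(i,j1,j2). \<bar>(real_of_ereal (Amax Ap Am i j1) + x j1) - (real_of_ereal (Amax Ap Am i j2) + x j2)\<bar>)"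
  define h where "h = (\<lambda>(i,j1,j2). \<bar>(real_of_ereal (C i j1) + x j1) - (real_of_ereal (C i j2) + x j2)\<bar>)"
  have "D \<subseteq> g ` ({..<m} \<times> {..<n} \<times> {..<n}) \<union> h ` ({..<p} \<times> {..<n} \<times> {..<n})"
  proof
    fix d assume "d \<in> D"
    then have "(\<exists>i<m. \<exists>j1<n. \<exists>j2<n. \<exists>a1 a2. Amax Ap Am i j1 = ereal a1 \<and> Amax Ap Am i j2 = ereal a2 \<and>
           d = \<bar>(a1 + x j1) - (a2 + x j2)\<bar>) \<or>
       (\<exists>k<p. \<exists>j1<n. \<exists>j2<n. \<exists>c1 c2. C k j1 = ereal c1 \<and> C k j2 = ereal c2 \<and>
           d = \<bar>(c1 + x j1) - (c2 + x j2)\<bar>)" unfolding D_def by blast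
    then show "d \<in> g ` ({..<m} \<times> {..<n} \<times> {..<n}) \<union> h ` ({..<p} \<times> {..<n} \<times> {..<n})"
    proof
      assume "\<exists>i<m. \<exists>j1<n. \<exists>j2<n. \<exists>a1 a2. Amax Ap Am i j1 = ereal a1 \<and> Amax Ap Am i j2 = ereal a2 \<and>
           d = \<bar>(a1 + x j1) - (a2 + x j2)\<bar>"
      then obtain i j1 j2 a1 a2 where H: "i<m" "j1<n" "j2<n" "Amax Ap Am i j1 = ereal a1" "Amax Ap Am i j2 = ereal a2"
           "d = \<bar>(a1 + x j1) - (a2 + x j2)\<bar>" by blast
      then have "d = g (i,j1,j2)" unfolding g_def by auto
      then show ?thesis using H by blast
    next
      assume "\<exists>k<p. \<exists>j1<n. \<exists>j2<n. \<exists>c1 c2. C k j1 = ereal c1 \<and> C k j2 = ereal c2 \<and>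
           d = \<bar>(c1 + x j1) - (c2 + x j2)\<bar>"
      then obtain i j1 j2 a1 a2 where H: "i<p" "j1<n" "j2<n" "C i j1 = ereal a1" "C i j2 = ereal a2"
           "d = \<bar>(a1 + x j1) - (a2 + x j2)\<bar>" by blast
      then have "d = h (i,j1,j2)" unfolding h_def by auto
      then show ?thesis using H by blast
    qed
  qed
  then have fD: "finite D" by (rule finite_subset) auto
  show ?thesis
  proof (cases "D = {}")
    case True then show ?thesis using e by (simp add: top_ereal_def)
  next
    case False
    have "0 < Min D" using fD False by (subst Min_gr_iff) (auto simp: D_def)
    moreover have "ereal (Min D) \<le> Inf (ereal ` D)"
      by (rule Inf_greatest) (use fD in auto)
    ultimately show ?thesis using e by (metis ereal_less(2) order_less_le_trans)
  qed
qed

lemma C_row: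
  assumes C_Rmax: "\<forall>k<p. \<forall>j<n. C k j \<noteq> \<infinity>"
    and C_rows: "\<forall>k<p. \<exists>j<n. C k j \<noteq> -\<infinity>"
    and k: "k<p" and d: "0<\<delta>" "ereal \<delta> < eps n m p Ap Am C x" and J: "J \<subseteq> {..<n}"
  shows "\<exists>R. rowmax n C x k = ereal R \<and>
      rowmax n C (indic_add x \<delta> J) k = ereal (R + (if k \<in> NU n p C J x then \<delta> else 0))"
proof -
  obtain R j0 where R: "j0<n" "C k j0 = ereal (R - x j0)" "rowmax n C x k = ereal R"
    using rowmax_fin[of n "C k" x] C_Rmax C_rows k unfolding rowmax_def by blast
  have gap: "\<forall>j<n. \<forall>a. C k j = ereal a \<and> a + x j \<noteq> R \<longrightarrow> \<delta> < \<bar>a + x j - R\<bar>"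
  proof (intro allI impI)
    fix j a assume j: "j<n" "C k j = ereal a \<and> a + x j \<noteq> R"
    have "eps n m p Ap Am C x \<le> ereal \<bar>(a + x j) - ((R - x j0) + x j0)\<bar>"
      by (rule eps_le_C) (use j R k in auto)
    then have "eps n m p Ap Am C x \<le> ereal \<bar>a + x j - R\<bar>" by simp
    with d(2) have "ereal \<delta> < ereal \<bar>a + x j - R\<bar>" by (rule less_le_trans)
    then show "\<delta> < \<bar>a + x j - R\<bar>" by simp
  qed
  have n: "0<n" using R by simp
  have sh: "rowmax n C (indic_add x \<delta> J) k = (if \<exists>j\<in>J. j<n \<and> C k j + ereal (x j) = ereal R then ereal (R + \<delta>) else ereal R)"
    unfolding rowmax_def using max_shift[OF n _ gap d(1), of J] R(3) unfolding rowmax_def by blast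
  have "(\<exists>j\<in>J. j<n \<and> C k j + ereal (x j) = ereal R) \<longleftrightarrow> k \<in> NU n p C J x"
    unfolding NU_def E1_def using R(3) k J by (auto; metis)
  then show ?thesis using sh R(3) by auto
qed

lemma Amax_add: "Amax Ap Am i j + ereal y = max (Ap i j + ereal y) (Am i j + ereal y)"
proof (cases "Ap i j \<le> Am i j")
  case True
  then have "Ap i j + ereal y \<le> Am i j + ereal y" by (rule add_right_mono)
  then show ?thesis using True unfolding Amax_def by (simp add: max_def)
next
  case False
  then have "Am i j \<le> Ap i j" by simp
  then have "Am i j + ereal y \<le> Ap i j + ereal y" by (rule add_right_mono)
  then show ?thesis using False unfolding Amax_def by (auto simp: max_def)
qed

lemma A_row:
  assumes Ap_Rmax: "\<forall>i<m. \<forall>j<n. Ap i j \<noteq> \<infinity>"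
    and Am_Rmax: "\<forall>i<m. \<forall>j<n. Am i j \<noteq> \<infinity>"
    and A_rows: "\<forall>i<m. \<exists>j<n. Amax Ap Am i j \<noteq> -\<infinity>"
    and xS: "x \<in> feasS n m Ap Am" and i: "i<m"
  shows "\<exists>M. rowmax n (Amax Ap Am) x i = ereal M \<and> (\<forall>j<n. Ap i j + ereal (x j) \<le> ereal M)
     \<and> (\<forall>j<n. Am i j + ereal (x j) \<le> ereal M) \<and> (\<exists>j<n. Ap i j + ereal (x j) = ereal M)
     \<and> (\<forall>j<n. \<forall>a. Amax Ap Am i j = ereal a \<and> a + x j \<noteq> M \<longrightarrow> eps n m p Ap Am C x \<le> ereal \<bar>a + x j - M\<bar>)"
proof -
  have fin: "\<forall>j<n. Amax Ap Am i j \<noteq> \<infinity>" using Ap_Rmax Am_Rmax i by (auto simp: Amax_def max_def)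
  obtain M j0 where R: "j0<n" "Amax Ap Am i j0 = ereal (M - x j0)" "rowmax n (Amax Ap Am) x i = ereal M"
    using rowmax_fin[of n "Amax Ap Am i" x] fin A_rows i unfolding rowmax_def by blast
  have n: "0<n" using R by simp
  have le: "\<forall>j<n. Amax Ap Am i j + ereal (x j) \<le> ereal M"
    using R(3) max_ge[of _ n "\<lambda>j. Amax Ap Am i j + ereal (x j)"] unfolding rowmax_def by auto
  then have le1: "\<forall>j<n. Ap i j + ereal (x j) \<le> ereal M" "\<forall>j<n. Am i j + ereal (x j) \<le> ereal M"
    unfolding Amax_add by auto
  have ex: "\<exists>j<n. Ap i j + ereal (x j) = ereal M"
  proof (cases "Am i j0 \<le> Ap i j0")
    case True
    then have "Ap i j0 + ereal (x j0) = ereal M" using R(2) unfolding Amax_def by (simp add: max_def)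
    then show ?thesis using R(1) by blast
  next
    case False
    then have "Ap i j0 \<le> Am i j0" by (meson linear)
    then have "Amax Ap Am i j0 = Am i j0" unfolding Amax_def max_def by simp
    then have "Am i j0 = ereal (M - x j0)" using R(2) by simp
    then have "Am i j0 + ereal (x j0) = ereal M" by simp
    moreover have "Am i j0 + ereal (x j0) \<le> rowmax n Am x i"
      unfolding rowmax_def by (rule max_ge) (use R in auto)
    moreover have "rowmax n Am x i \<le> rowmax n Ap x i" using xS i unfolding feasS_def by auto
    moreover obtain j1 where "j1<n" "rowmax n Ap x i = Ap i j1 + ereal (x j1)"
      using max_attained[OF n, of "\<lambda>j. Ap i j + ereal (x j)"] unfolding rowmax_def by blast
    ultimately show ?thesis using le1(1) by (metis antisym order_trans)
  qed
  have gap: "\<forall>j<n. \<forall>a. Amax Ap Am i j = ereal a \<and> a + x j \<noteq> M \<longrightarrow> eps n m p Ap Am C x \<le> ereal \<bar>a + x j - M\<bar>"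
  proof (intro allI impI)
    fix j a assume j: "j<n" "Amax Ap Am i j = ereal a \<and> a + x j \<noteq> M"
    have "eps n m p Ap Am C x \<le> ereal \<bar>(a + x j) - ((M - x j0) + x j0)\<bar>"
      by (rule eps_le_A) (use j R i in auto)
    then show "eps n m p Ap Am C x \<le> ereal \<bar>a + x j - M\<bar>" by simp
  qed
  show ?thesis using R(3) le1 ex gap by blast
qed


lemma feas_char:
  assumes A_rows: "\<forall>i<m. \<exists>j<n. Amax Ap Am i j \<noteq> -\<infinity>"
  shows "y \<in> feasS n m Ap Am \<longleftrightarrow>
    (\<forall>i<m. \<forall>j<n. \<exists>j'<n. Am i j + ereal (y j) \<le> Ap i j' + ereal (y j'))"
proof -
  have "(rowmax n Am y i \<le> rowmax n Ap y i) \<longleftrightarrow> (\<forall>j<n. \<exists>j'<n. Am i j + ereal (y j) \<le> Ap i j' + ereal (y j'))"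
    if i: "i<m" for i
  proof -
    have "0<n" using A_rows i by auto
    then show ?thesis unfolding rowmax_def by (rule max_cmp)
  qed
  then show ?thesis unfolding feasS_def by auto
qed

lemma indic_ge: "0 \<le> \<delta> \<Longrightarrow> r + ereal (x j) \<le> r + ereal (indic_add x \<delta> J j)"
  by (rule add_left_mono) (simp add: indic_add_def)

lemma feas_to_cond1:
  assumes Ap_Rmax: "\<forall>i<m. \<forall>j<n. Ap i j \<noteq> \<infinity>"
    and Am_Rmax: "\<forall>i<m. \<forall>j<n. Am i j \<noteq> \<infinity>"
    and A_rows: "\<forall>i<m. \<exists>j<n. Amax Ap Am i j \<noteq> -\<infinity>"
    and xS: "x \<in> feasS n m Ap Am"
    and J: "J \<subseteq> {..<n}" and d: "0 < \<delta>" and F: "indic_add x \<delta> J \<in> feasS n m Ap Am"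
  shows "\<forall>j\<in>J. \<forall>i\<in>NW_in n m Ap Am j x. \<exists>j'\<in>NV_in n Ap Am i x. j' \<in> J"
proof (intro ballI, rule ccontr)
  fix j i assume j: "j \<in> J" and i: "i \<in> NW_in n m Ap Am j x"
    and nex: "\<not> (\<exists>j'\<in>NV_in n Ap Am i x. j' \<in> J)"
  have im: "i<m" and E2: "rowmax n (Amax Ap Am) x i = Am i j + ereal (x j)"
    using i unfolding NW_in_def E2_def by auto
  obtain M where M: "rowmax n (Amax Ap Am) x i = ereal M" "\<forall>j<n. Ap i j + ereal (x j) \<le> ereal M"
    using A_row[OF Ap_Rmax Am_Rmax A_rows xS im] by blast
  have "Am i j = ereal (M - x j)" using E2 M(1) by (cases "Am i j") auto
  then have L: "Am i j + ereal (indic_add x \<delta> J j) = ereal (M + \<delta>)" using j by (simp add: indic_add_def)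
  have jn: "j < n" using J j by auto
  obtain j' where j': "j'<n" "Am i j + ereal (indic_add x \<delta> J j) \<le> Ap i j' + ereal (indic_add x \<delta> J j')"
    using F feas_char[OF A_rows] im jn by blast
  have "Ap i j' + ereal (indic_add x \<delta> J j') < ereal (M + \<delta>)"
  proof (cases "j' \<in> J")
    case True
    then have "\<not> E3 n Ap Am x j' i" using nex j'(1) unfolding NV_in_def by auto
    then have "Ap i j' + ereal (x j') \<noteq> ereal M" using M(1) unfolding E3_def by auto
    then have lt: "Ap i j' + ereal (x j') < ereal M" using M(2) j'(1) by auto
    then show ?thesis using True d by (cases "Ap i j'") (auto simp: indic_add_def)
  next
    case False
    then show ?thesis using M(2) j'(1) d by (cases "Ap i j'") (force simp: indic_add_def)+
  qed
  then show False using j' L by simp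
qed


lemma cond1_to_feas:
  assumes Ap_Rmax: "\<forall>i<m. \<forall>j<n. Ap i j \<noteq> \<infinity>"
    and Am_Rmax: "\<forall>i<m. \<forall>j<n. Am i j \<noteq> \<infinity>"
    and A_rows: "\<forall>i<m. \<exists>j<n. Amax Ap Am i j \<noteq> -\<infinity>"
    and xS: "x \<in> feasS n m Ap Am"
    and J: "J \<subseteq> {..<n}" and d: "0 < \<delta>" "ereal \<delta> < eps n m p Ap Am C x"
    and c1: "\<forall>j\<in>J. \<forall>i\<in>NW_in n m Ap Am j x. \<exists>j'\<in>NV_in n Ap Am i x. j' \<in> J"
  shows "indic_add x \<delta> J \<in> feasS n m Ap Am"
  unfolding feas_char[OF A_rows]
proof (intro allI impI)
  fix i j assume i: "i<m" and j: "j<n"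
  let ?y = "indic_add x \<delta> J"
  obtain M where M: "rowmax n (Amax Ap Am) x i = ereal M" "\<forall>j<n. Ap i j + ereal (x j) \<le> ereal M"
     "\<forall>j<n. Am i j + ereal (x j) \<le> ereal M" "\<exists>j<n. Ap i j + ereal (x j) = ereal M"
     "\<forall>j<n. \<forall>a. Amax Ap Am i j = ereal a \<and> a + x j \<noteq> M \<longrightarrow> eps n m p Ap Am C x \<le> ereal \<bar>a + x j - M\<bar>"
    using A_row[OF Ap_Rmax Am_Rmax A_rows xS i] by blast
  obtain j0 where j0: "j0<n" "Ap i j0 + ereal (x j0) = ereal M" using M(4) by blast
  have j0': "ereal M \<le> Ap i j0 + ereal (?y j0)" using j0(2) indic_ge[OF less_imp_le[OF d(1)], of "Ap i j0" x j0 J] by simp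
  show "\<exists>j'<n. Am i j + ereal (?y j) \<le> Ap i j' + ereal (?y j')"
  proof (cases "Am i j + ereal (x j) = ereal M")
    case True
    show ?thesis
    proof (cases "j \<in> J")
      case jJ: True
      have "i \<in> NW_in n m Ap Am j x" unfolding NW_in_def E2_def using i True M(1) by auto
      then obtain j' where j': "j' \<in> NV_in n Ap Am i x" "j' \<in> J" using c1 jJ by blast
      then have j'n: "j'<n" and "Ap i j' + ereal (x j') = ereal M" unfolding NV_in_def E3_def using M(1) by auto
      then have "Ap i j' = ereal (M - x j')" by (cases "Ap i j'") auto
      moreover have "Am i j = ereal (M - x j)" using True by (cases "Am i j") auto
      ultimately have "Am i j + ereal (?y j) \<le> Ap i j' + ereal (?y j')" using jJ j'(2) by (simp add: indic_add_def)
      then show ?thesis using j'n by blast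
    next
      case False
      then have "Am i j + ereal (?y j) = ereal M" using True by (simp add: indic_add_def)
      then show ?thesis using j0 j0' by auto
    qed
  next
    case False
    show ?thesis
    proof (cases "Am i j")
      case (real a)
      have lt: "a + x j < M" using False M(3) j real by auto
      show ?thesis
      proof (cases "Am i j \<le> Ap i j")
        case True
        then have "Am i j + ereal (?y j) \<le> Ap i j + ereal (?y j)" by (rule add_right_mono)
        then show ?thesis using j by blast
      next
        case nle: False
        then have "Amax Ap Am i j = ereal a" using real unfolding Amax_def max_def by auto
        then have "eps n m p Ap Am C x \<le> ereal \<bar>a + x j - M\<bar>" using M(5) j lt by auto
        with d(2) have "ereal \<delta> < ereal \<bar>a + x j - M\<bar>" by (rule less_le_trans)
        then have "a + x j + \<delta> < M" using lt by simp
        then have "Am i j + ereal (?y j) \<le> ereal M" using real d(1) by (auto simp: indic_add_def)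
        then show ?thesis using j0 j0' by (meson order_trans)
      qed
    next
      case PInf then show ?thesis using M(3) j by auto
    next
      case MInf then show ?thesis using j0 by auto
    qed
  qed
qed


lemma sum_ind:
  fixes f :: "nat \<Rightarrow> real"
  assumes "finite A" "B \<subseteq> A"
  shows "(\<Sum>k\<in>A. f k * (if k\<in>B then \<delta> else 0)) = \<delta> * (\<Sum>k\<in>B. f k)"
proof -
  have "(\<Sum>k\<in>A. f k * (if k\<in>B then \<delta> else 0)) = (\<Sum>k\<in>A. if k\<in>B then \<delta> * f k else 0)"
    by (rule sum.cong) auto
  also have "\<dots> = (\<Sum>k\<in>A \<inter> B. \<delta> * f k)" using assms(1) by (simp add: sum.inter_restrict)
  also have "A \<inter> B = B" using assms(2) by auto
  finally show ?thesis by (simp add: sum_distrib_left)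
qed

lemma obj_iff:
  assumes C_Rmax: "\<forall>k<p. \<forall>j<n. C k j \<noteq> \<infinity>"
    and C_rows: "\<forall>k<p. \<exists>j<n. C k j \<noteq> -\<infinity>"
    and d: "0<\<delta>" "ereal \<delta> < eps n m p Ap Am C x" and J: "J \<subseteq> {..<n}"
  shows "objf n p C mup mum (indic_add x \<delta> J) < objf n p C mup mum x \<longleftrightarrow> muJ n p C mup mum J x < 0"
proof -
  define R where "R k = real_of_ereal (rowmax n C x k)" for k
  define N where "N = NU n p C J x"
  have RR: "rowmax n C x k = ereal (R k)" "rowmax n C (indic_add x \<delta> J) k = ereal (R k + (if k \<in> N then \<delta> else 0))"
    if "k<p" for k
    using C_row[OF C_Rmax C_rows that d J] unfolding R_def N_def by auto
  have s1: "(\<Sum>k<p. ereal (real (mup k)) * rowmax n C x k) = ereal (\<Sum>k<p. real (mup k) * R k)"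
  proof -
    have "(\<Sum>k<p. ereal (real (mup k)) * rowmax n C x k) = (\<Sum>k<p. ereal (real (mup k) * R k))"
      by (rule sum.cong) (auto simp: RR)
    then show ?thesis by simp
  qed
  have s2: "(\<Sum>k<p. ereal (real (mup k)) * rowmax n C (indic_add x \<delta> J) k)
      = ereal (\<Sum>k<p. real (mup k) * (R k + (if k \<in> N then \<delta> else 0)))"
  proof -
    have "(\<Sum>k<p. ereal (real (mup k)) * rowmax n C (indic_add x \<delta> J) k)
        = (\<Sum>k<p. ereal (real (mup k) * (R k + (if k \<in> N then \<delta> else 0))))"
      by (rule sum.cong) (auto simp: RR)
    then show ?thesis by simp
  qed
  have N: "N \<subseteq> {..<p}" unfolding N_def NU_def by auto
  have e1: "(\<Sum>k<p. real (mup k) * (R k + (if k \<in> N then \<delta> else 0)))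
      = (\<Sum>k<p. real (mup k) * R k) + \<delta> * (\<Sum>k\<in>N. real (mup k))"
    using sum_ind[of "{..<p}" N "\<lambda>k. real (mup k)" \<delta>] N by (simp add: distrib_left sum.distrib)
  have e2: "(\<Sum>j<n. real (mum j) * indic_add x \<delta> J j)
      = (\<Sum>j<n. real (mum j) * x j) + \<delta> * (\<Sum>j\<in>J. real (mum j))"
    using sum_ind[of "{..<n}" J "\<lambda>k. real (mum k)" \<delta>] J by (simp add: indic_add_def distrib_left sum.distrib)
  have mu: "real_of_int (muJ n p C mup mum J x) = (\<Sum>k\<in>N. real (mup k)) - (\<Sum>j\<in>J. real (mum j))"
    unfolding muJ_def N_def by simp
  have "objf n p C mup mum (indic_add x \<delta> J) < objf n p C mup mum x \<longleftrightarrow>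
     \<delta> * ((\<Sum>k\<in>N. real (mup k)) - (\<Sum>j\<in>J. real (mum j))) < 0"
    unfolding objf_def s1 s2 e1 e2 by (simp add: algebra_simps)
  also have "\<dots> \<longleftrightarrow> (\<Sum>k\<in>N. real (mup k)) - (\<Sum>j\<in>J. real (mum j)) < 0"
    using d(1) by (simp add: mult_less_0_iff)
  also have "\<dots> \<longleftrightarrow> muJ n p C mup mum J x < 0" using mu by linarith
  finally show ?thesis .
qed

theorem theorem4p1:
  fixes n m p :: nat
    and Ap Am C :: "nat \<Rightarrow> nat \<Rightarrow> ereal"
    and mup mum :: "nat \<Rightarrow> nat"
    and x :: "nat \<Rightarrow> real"
    and J :: "nat set"
  assumes Ap_Rmax: "\<forall>i<m. \<forall>j<n. Ap i j \<noteq> \<infinity>"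
    and Am_Rmax: "\<forall>i<m. \<forall>j<n. Am i j \<noteq> \<infinity>"
    and C_Rmax: "\<forall>k<p. \<forall>j<n. C k j \<noteq> \<infinity>"
    and A_rows: "\<forall>i<m. \<exists>j<n. Amax Ap Am i j \<noteq> -\<infinity>"
    and C_rows: "\<forall>k<p. \<exists>j<n. C k j \<noteq> -\<infinity>"
    and mu_bal: "(\<Sum>k<p. mup k) = (\<Sum>j<n. mum j)"
    and conn: "graph_connected n m p (Amax Ap Am) C"
    and xS: "x \<in> feasS n m Ap Am"
    and J_sub: "J \<subseteq> {..<n}"
  shows "(\<forall>\<delta>::real. 0 < \<delta> \<and> ereal \<delta> < eps n m p Ap Am C x \<longrightarrow>
            indic_add x \<delta> J \<in> feasS n m Ap Am \<and>
            objf n p C mup mum (indic_add x \<delta> J) < objf n p C mup mum x)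
         \<longleftrightarrow>
         ((\<forall>j\<in>J. \<forall>i\<in>NW_in n m Ap Am j x. \<exists>j'\<in>NV_in n Ap Am i x. j' \<in> J) \<and>
          muJ n p C mup mum J x < 0)"
proof
  assume H: "\<forall>\<delta>::real. 0 < \<delta> \<and> ereal \<delta> < eps n m p Ap Am C x \<longrightarrow>
            indic_add x \<delta> J \<in> feasS n m Ap Am \<and>
            objf n p C mup mum (indic_add x \<delta> J) < objf n p C mup mum x"
  obtain \<delta> where "0 < ereal \<delta>" "ereal \<delta> < eps n m p Ap Am C x"
    using ereal_dense2[OF eps_pos] by blast
  then have d: "0 < \<delta>" "ereal \<delta> < eps n m p Ap Am C x" by auto
  then have F: "indic_add x \<delta> J \<in> feasS n m Ap Am"
    and O: "objf n p C mup mum (indic_add x \<delta> J) < objf n p C mup mum x" using H by auto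
  show "(\<forall>j\<in>J. \<forall>i\<in>NW_in n m Ap Am j x. \<exists>j'\<in>NV_in n Ap Am i x. j' \<in> J) \<and>
          muJ n p C mup mum J x < 0"
    using feas_to_cond1[OF Ap_Rmax Am_Rmax A_rows xS J_sub d(1) F]
      obj_iff[OF C_Rmax C_rows d J_sub] O by blast
next
  assume H: "(\<forall>j\<in>J. \<forall>i\<in>NW_in n m Ap Am j x. \<exists>j'\<in>NV_in n Ap Am i x. j' \<in> J) \<and>
          muJ n p C mup mum J x < 0"
  show "\<forall>\<delta>::real. 0 < \<delta> \<and> ereal \<delta> < eps n m p Ap Am C x \<longrightarrow>
            indic_add x \<delta> J \<in> feasS n m Ap Am \<and>
            objf n p C mup mum (indic_add x \<delta> J) < objf n p C mup mum x"
  proof (intro allI impI)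
    fix \<delta> :: real assume "0 < \<delta> \<and> ereal \<delta> < eps n m p Ap Am C x"
    then have d: "0 < \<delta>" "ereal \<delta> < eps n m p Ap Am C x" by auto
    show "indic_add x \<delta> J \<in> feasS n m Ap Am \<and>
            objf n p C mup mum (indic_add x \<delta> J) < objf n p C mup mum x"
      using cond1_to_feas[OF Ap_Rmax Am_Rmax A_rows xS J_sub d] H
        obj_iff[OF C_Rmax C_rows d J_sub] by blast
  qed
qed

end
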